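(* Consider a football league with $n\ge 2$ teams in which every pair of distinct teams $i\neq j$ plays twice, once at the home ground of each team; let $X_{ij1}$ (resp. $X_{ij0}$) be the number of goals scored by team $i$ against team $j$ in the match at $i$'s (resp. $j$'s) home ground. Suppose every win, draw and loss is awarded $3$, $1$ and $0$ points respectively, and that the $X_{ijk}$, $i\neq j$, $k\in\{0,1\}$, are independent and each follows a Poisson distribution with the same mean $\lambda>0$. Then the league is perfectly balanced.
   Context: The match between team $i$ at home and team $j$ is a win/draw/loss for $i$ according as $X_{ij1}>,=,<X_{ji0}$. For each team $i$, $S_i$ is its total points over all its matches, $GS_i=\sum_{j\neq i}\sum_{k\in\{0,1\}}X_{ijk}$ its total goals scored, $GC_i=\sum_{j\neq i}\sum_{k\in\{0,1\}}X_{jik}$ its total goals conceded, and $GD_i=GS_i-GC_i$ its goal difference. The final standing (an ordering of the $n$ teams) is determined first by $S_i$, then by $GD_i$, then by $GS_i$, with any further ties broken by criteria (such as head-to-head points) that treat the teams symmetrically. A league is called perfectly balanced if every permutation of the teams is equally likely to be the final standing. *)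

theory Defs
  imports "HOL-Probability.Probability" "HOL-Combinatorics.Permutations"
begin

text \<open>Teams are 0,...,n-1. A match outcome is a function
  x :: nat \<times> nat \<times> bool \<Rightarrow> nat where x (i,j,True) = X_ij1 (goals of i
  against j at i's home) and x (i,j,False) = X_ij0 (goals of i against j at j's home).\<close>

definition match_index :: "nat \<Rightarrow> (nat \<times> nat \<times> bool) set" where
  "match_index n = {(i,j,k). i < n \<and> j < n \<and> i \<noteq> j}"

definition valid_outcome :: "nat \<Rightarrow> (nat \<times> nat \<times> bool \<Rightarrow> nat) \<Rightarrow> bool" where
  "valid_outcome n x \<longleftrightarrow> (\<forall>t. t \<notin> match_index n \<longrightarrow> x t = 0)"

definition match_points :: "nat \<Rightarrow> nat \<Rightarrow> nat" where
  "match_points a b = (if a > b then 3 else if a = b then 1 else 0)"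

definition points :: "nat \<Rightarrow> (nat \<times> nat \<times> bool \<Rightarrow> nat) \<Rightarrow> nat \<Rightarrow> nat" where
  "points n x i = (\<Sum>j\<in>{..<n} - {i}.
      match_points (x (i,j,True)) (x (j,i,False)) + match_points (x (i,j,False)) (x (j,i,True)))"

definition goals_scored :: "nat \<Rightarrow> (nat \<times> nat \<times> bool \<Rightarrow> nat) \<Rightarrow> nat \<Rightarrow> nat" where
  "goals_scored n x i = (\<Sum>j\<in>{..<n} - {i}. \<Sum>k\<in>(UNIV::bool set). x (i,j,k))"

definition goals_conceded :: "nat \<Rightarrow> (nat \<times> nat \<times> bool \<Rightarrow> nat) \<Rightarrow> nat \<Rightarrow> nat" where
  "goals_conceded n x i = (\<Sum>j\<in>{..<n} - {i}. \<Sum>k\<in>(UNIV::bool set). x (j,i,k))"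

definition goal_difference :: "nat \<Rightarrow> (nat \<times> nat \<times> bool \<Rightarrow> nat) \<Rightarrow> nat \<Rightarrow> int" where
  "goal_difference n x i = int (goals_scored n x i) - int (goals_conceded n x i)"

definition ahead :: "nat \<Rightarrow> (nat \<times> nat \<times> bool \<Rightarrow> nat) \<Rightarrow> nat \<Rightarrow> nat \<Rightarrow> bool" where
  "ahead n x i j \<longleftrightarrow>
     points n x i > points n x j \<or>
     (points n x i = points n x j \<and>
       (goal_difference n x i > goal_difference n x j \<or>
        (goal_difference n x i = goal_difference n x j \<and> goals_scored n x i > goals_scored n x j)))"

definition relabel :: "(nat \<Rightarrow> nat) \<Rightarrow> (nat \<times> nat \<times> bool \<Rightarrow> nat) \<Rightarrow> (nat \<times> nat \<times> bool \<Rightarrow> nat)" where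
  "relabel \<sigma> x = (\<lambda>(i,j,k). x (\<sigma> i, \<sigma> j, k))"

text \<open>A standing is a permutation p of {..<n}: p i is the final position of team i
  (position 0 = top). A standing rule assigns to each outcome a (possibly random, e.g. lots)
  standing; it must respect points, goal difference, goals scored, and treat teams
  symmetrically (equivariance under relabelling).\<close>
definition admissible_standing_rule ::
  "nat \<Rightarrow> ((nat \<times> nat \<times> bool \<Rightarrow> nat) \<Rightarrow> (nat \<Rightarrow> nat) pmf) \<Rightarrow> bool" where
  "admissible_standing_rule n R \<longleftrightarrow>
     (\<forall>x. valid_outcome n x \<longrightarrow>
        (\<forall>p\<in>set_pmf (R x). p permutes {..<n} \<and>
            (\<forall>i<n. \<forall>j<n. ahead n x i j \<longrightarrow> p i < p j)) \<and>
        (\<forall>\<sigma>. \<sigma> permutes {..<n} \<longrightarrow> R (relabel \<sigma> x) = map_pmf (\<lambda>p. p \<circ> \<sigma>) (R x)))"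

definition goals_distribution :: "nat \<Rightarrow> real \<Rightarrow> (nat \<times> nat \<times> bool \<Rightarrow> nat) pmf" where
  "goals_distribution n lam = Pi_pmf (match_index n) 0 (\<lambda>_. poisson_pmf lam)"

definition final_standing :: "nat \<Rightarrow> real \<Rightarrow> ((nat \<times> nat \<times> bool \<Rightarrow> nat) \<Rightarrow> (nat \<Rightarrow> nat) pmf)
    \<Rightarrow> (nat \<Rightarrow> nat) pmf" where
  "final_standing n lam R = bind_pmf (goals_distribution n lam) R"

definition perfectly_balanced :: "nat \<Rightarrow> real \<Rightarrow> ((nat \<times> nat \<times> bool \<Rightarrow> nat) \<Rightarrow> (nat \<Rightarrow> nat) pmf) \<Rightarrow> bool" where
  "perfectly_balanced n lam R \<longleftrightarrow>
     (\<forall>p q. p permutes {..<n} \<longrightarrow> q permutes {..<n} \<longrightarrow>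
        pmf (final_standing n lam R) p = pmf (final_standing n lam R) q)"

end

theory Submission
  imports Defs
begin

lemma finite_match_index: "finite (match_index n)"
proof -
  have "match_index n \<subseteq> {..<n} \<times> {..<n} \<times> (UNIV::bool set)"
    by (auto simp: match_index_def)
  thus ?thesis by (rule finite_subset) auto
qed

lemma relabel_invariant:
  assumes s: "\<sigma> permutes {..<n}"
  shows "map_pmf (relabel \<sigma>) (goals_distribution n lam) = goals_distribution n lam"
proof -
  define h where "h = (\<lambda>(i::nat,j::nat,k::bool). (\<sigma> i, \<sigma> j, k))"
  have rel: "relabel \<sigma> = (\<lambda>g. g \<circ> h)"
    by (auto simp: relabel_def h_def fun_eq_iff)
  have inj: "inj \<sigma>" using s by (rule permutes_inj)
  have mem: "\<And>i. \<sigma> i < n \<longleftrightarrow> i < n"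
    using s by (metis lessThan_iff permutes_in_image)
  have hin: "x \<in> match_index n \<longleftrightarrow> h x \<in> match_index n" for x
    using inj by (cases x) (auto simp: h_def match_index_def mem inj_eq)
  have injh: "inj h"
    using inj by (auto simp: h_def inj_def)
  have surjh: "surj h"
  proof -
    have "surj \<sigma>" using s by (rule permutes_surj)
    then show ?thesis unfolding h_def surj_def
      by (metis case_prod_conv prod_cases3)
  qed
  have "bij_betw h (match_index n) (match_index n)"
  proof -
    have "h ` match_index n = match_index n"
    proof
      show "h ` match_index n \<subseteq> match_index n" using hin by auto
      show "match_index n \<subseteq> h ` match_index n"
      proof
        fix y assume y: "y \<in> match_index n"
        obtain x where "y = h x" using surjh by (metis surjD)
        with y hin show "y \<in> h ` match_index n" by auto
      qed
    qed
    then show ?thesis using injh by (simp add: bij_betw_def inj_on_subset[OF injh subset_UNIV])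
  qed
  then have "Pi_pmf (match_index n) 0 (\<lambda>_. poisson_pmf lam)
     = map_pmf (\<lambda>g. g \<circ> h) (Pi_pmf (match_index n) 0 (\<lambda>_. poisson_pmf lam))"
    by (rule Pi_pmf_bij_betw[OF finite_match_index]) (use hin in blast)+
  then show ?thesis unfolding goals_distribution_def rel by simp
qed

lemma standing_invariant:
  assumes adm: "admissible_standing_rule n R" and s: "\<sigma> permutes {..<n}"
  shows "map_pmf (\<lambda>p. p \<circ> \<sigma>) (final_standing n lam R) = final_standing n lam R"
proof -
  let ?G = "goals_distribution n lam"
  have valid: "valid_outcome n x" if "x \<in> set_pmf ?G" for x
  proof -
    have "x \<in> {f. \<forall>t. t \<notin> match_index n \<longrightarrow> f t = 0}"
      using set_Pi_pmf_subset[OF finite_match_index[of n], of 0 "\<lambda>_. poisson_pmf lam"] that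
      unfolding goals_distribution_def by (rule subsetD)
    then show ?thesis by (simp add: valid_outcome_def)
  qed
  have eqR: "R (relabel \<sigma> x) = map_pmf (\<lambda>p. p \<circ> \<sigma>) (R x)" if "x \<in> set_pmf ?G" for x
  proof -
    have "valid_outcome n x" using valid[OF that] .
    with adm have "\<forall>\<sigma>. \<sigma> permutes {..<n} \<longrightarrow> R (relabel \<sigma> x) = map_pmf (\<lambda>p. p \<circ> \<sigma>) (R x)"
      unfolding admissible_standing_rule_def by blast
    with s show ?thesis by blast
  qed
  have "final_standing n lam R = bind_pmf (map_pmf (relabel \<sigma>) ?G) R"
    unfolding final_standing_def relabel_invariant[OF s] ..
  also have "\<dots> = bind_pmf ?G (\<lambda>x. R (relabel \<sigma> x))"
    by (simp add: bind_map_pmf)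
  also have "\<dots> = bind_pmf ?G (\<lambda>x. map_pmf (\<lambda>p. p \<circ> \<sigma>) (R x))"
    by (rule bind_pmf_cong) (simp_all add: eqR)
  also have "\<dots> = map_pmf (\<lambda>p. p \<circ> \<sigma>) (final_standing n lam R)"
    by (simp add: final_standing_def map_bind_pmf)
  finally show ?thesis by (rule sym)
qed

theorem theorem2:
  fixes n :: nat and lam :: real
    and R :: "(nat \<times> nat \<times> bool \<Rightarrow> nat) \<Rightarrow> (nat \<Rightarrow> nat) pmf"
  assumes "n \<ge> 2" and "lam > 0"
    and "admissible_standing_rule n R"
  shows "perfectly_balanced n lam R"
  unfolding perfectly_balanced_def
proof (intro allI impI)
  fix p q assume p: "p permutes {..<n}" and q: "q permutes {..<n}"
  define \<sigma> where "\<sigma> = inv p \<circ> q"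
  have s: "\<sigma> permutes {..<n}" unfolding \<sigma>_def
    by (intro permutes_compose permutes_inv p q)
  have pq: "p \<circ> \<sigma> = q"
    unfolding \<sigma>_def using permutes_surj[OF p] by (simp add: o_assoc surj_iff)
  have injc: "inj (\<lambda>r::nat\<Rightarrow>nat. r \<circ> \<sigma>)"
  proof (rule injI)
    fix a b :: "nat \<Rightarrow> nat" assume "a \<circ> \<sigma> = b \<circ> \<sigma>"
    then show "a = b" using permutes_surj[OF s] by (metis fun.map_comp surj_iff o_id)
  qed
  have "pmf (final_standing n lam R) q
      = pmf (map_pmf (\<lambda>r. r \<circ> \<sigma>) (final_standing n lam R)) (p \<circ> \<sigma>)"
    using standing_invariant[OF assms(3) s] pq by simp
  also have "\<dots> = pmf (final_standing n lam R) p"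
    by (rule pmf_map_inj') (rule injc)
  finally show "pmf (final_standing n lam R) p = pmf (final_standing n lam R) q" by simp
qed

end
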